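(* Let $N\ge 1$ and let $(A_N,H_N,D_N)$ be the fuzzy sphere spectral triple described in the context. Then the module of one-forms $\mathcal{E}=\Omega^1(A_N)$ is a free right $A_N$-module of rank $3$ with basis the central elements $1\otimes\sigma_1,\ 1\otimes\sigma_2,\ 1\otimes\sigma_3$.
   Context: Let $J_1,J_2,J_3$ be a basis of the Lie algebra $su(2)$ with $[J_k,J_l]=\sum_{m=1}^3\epsilon_{klm}J_m$ ($\epsilon$ the totally antisymmetric symbol, $\epsilon_{123}=1$). For $n\ge0$ let $\rho_{n/2}$ be the $(n+1)$-dimensional irreducible unitary representation of $su(2)$ on $\mathbb{C}^{n+1}$ (so each $\rho_{n/2}(J_k)$ is skew-Hermitian). Let $K_N=\oplus_{n=0}^N\mathbb{C}^{n+1}$, $X_k=\oplus_{n=0}^N\rho_{n/2}(J_k)\in B(K_N)$, $A_N=B(K_N)$, $H_N=K_N\otimes_{\mathbb{C}}\mathbb{C}^2$ with $a\in A_N$ acting as $a\otimes 1$. Let $\tau_1,\tau_2,\tau_3$ be the Pauli matrices, $\sigma_k=\sqrt{-1}\,\tau_k$, and $D_N=\sum_{k=1}^3X_k\otimes\sigma_k$; identify $B(H_N)=A_N\otimes_{\mathbb{C}}M_2(\mathbb{C})$. The one-forms of the spectral triple are $\Omega^1(A_N)=\{\sum_ja_j[D_N,b_j]:a_j,b_j\in A_N\}\subseteq A_N\otimes M_2(\mathbb{C})$, an $A_N$-bimodule, with $da=[D_N,a]$. *)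

theory Defs
  imports Complex_Main "Jordan_Normal_Form.Matrix"
begin

text \<open>Fuzzy sphere spectral triple. K_N = direct sum of C^(n+1), n = 0..N,
  realised as C^d with d = (N+1)(N+2)/2; the summand C^(n+1) occupies the
  indices blk_start n .. blk_start n + n.\<close>

definition blk_start :: "nat \<Rightarrow> nat" where
  "blk_start n = n * (n + 1) div 2"

definition KN_dim :: "nat \<Rightarrow> nat" where
  "KN_dim N = blk_start (Suc N)"

definition blk :: "nat \<Rightarrow> nat" where
  "blk i = (LEAST n. i < blk_start (Suc n))"

text \<open>Standard (Hermitian) spin-n/2 matrices in the basis |n/2, m>,
  m = n/2 - a, a = 0..n:  L_+ |m> = sqrt((j-m)(j+m+1)) |m+1>.\<close>

definition spin_plus :: "nat \<Rightarrow> nat \<Rightarrow> nat \<Rightarrow> complex" where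
  "spin_plus n b a = (if b + 1 = a then complex_of_real (sqrt (real (a * (n + 1 - a)))) else 0)"

definition spin_L :: "nat \<Rightarrow> nat \<Rightarrow> nat \<Rightarrow> nat \<Rightarrow> complex" where
  "spin_L k n b a =
     (if k = 1 then (spin_plus n b a + spin_plus n a b) / 2
      else if k = 2 then (spin_plus n b a - spin_plus n a b) / (2 * \<i>)
      else if k = 3 then (if b = a then of_real (real n / 2 - real a) else 0)
      else 0)"

text \<open>rho_{n/2}(J_k) = -i L_k : skew-Hermitian, [rho(J_k),rho(J_l)] = eps_klm rho(J_m).\<close>
definition rho :: "nat \<Rightarrow> nat \<Rightarrow> nat \<Rightarrow> nat \<Rightarrow> complex" where
  "rho k n b a = - \<i> * spin_L k n b a"

definition Xop :: "nat \<Rightarrow> nat \<Rightarrow> complex mat" where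
  "Xop N k = mat (KN_dim N) (KN_dim N)
     (\<lambda>(i, j). if blk i = blk j then rho k (blk i) (i - blk_start (blk i)) (j - blk_start (blk j)) else 0)"

definition pauli :: "nat \<Rightarrow> complex mat" where
  "pauli k = mat 2 2 (\<lambda>(i, j).
     if k = 1 then (if i \<noteq> j then 1 else 0)
     else if k = 2 then (if i = 0 \<and> j = 1 then - \<i> else if i = 1 \<and> j = 0 then \<i> else 0)
     else if k = 3 then (if i = j then (if i = 0 then 1 else -1) else 0)
     else 0)"

definition sigma :: "nat \<Rightarrow> complex mat" where
  "sigma k = \<i> \<cdot>\<^sub>m pauli k"

text \<open>Tensor product a \<otimes> s (s a 2x2 matrix), identifying K_N \<otimes> C^2 with C^(2d)
  via the index (i, alpha) \<mapsto> 2 i + alpha.\<close>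
definition tens :: "complex mat \<Rightarrow> complex mat \<Rightarrow> complex mat" where
  "tens a s = mat (2 * dim_row a) (2 * dim_col a)
     (\<lambda>(i, j). a $$ (i div 2, j div 2) * s $$ (i mod 2, j mod 2))"

definition Dirac :: "nat \<Rightarrow> complex mat" where
  "Dirac N = tens (Xop N 1) (sigma 1) + tens (Xop N 2) (sigma 2) + tens (Xop N 3) (sigma 3)"

definition rep :: "complex mat \<Rightarrow> complex mat" where
  "rep a = tens a (1\<^sub>m 2)"

definition dd :: "nat \<Rightarrow> complex mat \<Rightarrow> complex mat" where
  "dd N b = Dirac N * rep b - rep b * Dirac N"

inductive_set Omega1 :: "nat \<Rightarrow> complex mat set" for N :: nat where
  zero: "0\<^sub>m (2 * KN_dim N) (2 * KN_dim N) \<in> Omega1 N"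
| step: "a \<in> carrier_mat (KN_dim N) (KN_dim N) \<Longrightarrow> b \<in> carrier_mat (KN_dim N) (KN_dim N)
          \<Longrightarrow> w \<in> Omega1 N \<Longrightarrow> rep a * dd N b + w \<in> Omega1 N"

definition ebasis :: "nat \<Rightarrow> nat \<Rightarrow> complex mat" where
  "ebasis N k = tens (1\<^sub>m (KN_dim N)) (sigma k)"

end

theory Submission
  imports Defs
begin

lemma sum_double: "(\<Sum>l<2*n. f l) = (\<Sum>m<n. f (2*m) + f (2*m+1))" for f :: "nat \<Rightarrow> 'a::comm_monoid_add"
  by (induction n) (auto simp: add.assoc add.left_commute)

lemma tens_carrier[simp]: "a \<in> carrier_mat n m \<Longrightarrow> tens a s \<in> carrier_mat (2*n) (2*m)"
  unfolding tens_def by auto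

lemma tens_dim[simp]: "dim_row (tens a s) = 2 * dim_row a" "dim_col (tens a s) = 2 * dim_col a"
  unfolding tens_def by auto

lemma tens_index[simp]: "i < 2*dim_row a \<Longrightarrow> j < 2*dim_col a \<Longrightarrow>
   tens a s $$ (i,j) = a $$ (i div 2, j div 2) * s $$ (i mod 2, j mod 2)"
  unfolding tens_def by auto

lemma tens_mult:
  assumes a: "a \<in> carrier_mat n m" and b: "b \<in> carrier_mat m k"
    and s: "s \<in> carrier_mat 2 2" and t: "t \<in> carrier_mat 2 2"
  shows "tens a s * tens b t = tens (a*b) (s*t)"
proof (rule eq_matI)
  fix i j assume i: "i < dim_row (tens (a*b) (s*t))" and j: "j < dim_col (tens (a*b) (s*t))"
  have i': "i div 2 < n" "i mod 2 < 2" using i a by auto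
  have j': "j div 2 < k" "j mod 2 < 2" using j b by auto
  have "(tens a s * tens b t) $$ (i,j) = (\<Sum>l<2*m. tens a s $$ (i,l) * tens b t $$ (l,j))"
    using i j a b by (simp add: scalar_prod_def atLeast0LessThan sum.reindex)
  also have "\<dots> = (\<Sum>q<m. a $$ (i div 2, q) * s $$ (i mod 2, 0) * (b $$ (q, j div 2) * t $$ (0, j mod 2))
        + a $$ (i div 2, q) * s $$ (i mod 2, 1) * (b $$ (q, j div 2) * t $$ (1, j mod 2)))"
    unfolding sum_double using i j a b by (intro sum.cong refl) auto
  also have "\<dots> = (\<Sum>q<m. a $$ (i div 2, q) * b $$ (q, j div 2)) *
       (s $$ (i mod 2, 0) * t $$ (0, j mod 2) + s $$ (i mod 2, 1) * t $$ (1, j mod 2))"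
    by (simp add: sum_distrib_left sum_distrib_right distrib_left distrib_right sum.distrib mult.assoc mult.left_commute)
  also have "\<dots> = tens (a*b) (s*t) $$ (i,j)"
    using i j a b s t i' j' by (simp add: scalar_prod_def atLeast0LessThan numeral_2_eq_2 lessThan_Suc)
  finally show "(tens a s * tens b t) $$ (i,j) = tens (a*b) (s*t) $$ (i,j)" .
qed (use a b in auto)


lemma tens_add: "a \<in> carrier_mat n m \<Longrightarrow> b \<in> carrier_mat n m \<Longrightarrow> tens (a+b) s = tens a s + tens b s"
  by (rule eq_matI) (auto simp: distrib_right)
lemma tens_minus: "a \<in> carrier_mat n m \<Longrightarrow> b \<in> carrier_mat n m \<Longrightarrow> tens (a-b) s = tens a s - tens b s"
  by (rule eq_matI) (auto simp: left_diff_distrib)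
lemma tens_uminus: "tens (-a) s = - tens a s"
  by (rule eq_matI) auto
lemma tens_zero: "tens (0\<^sub>m n m) s = 0\<^sub>m (2*n) (2*m)"
  by (rule eq_matI) auto

lemma pauli_carrier[simp]: "pauli k \<in> carrier_mat 2 2" unfolding pauli_def by auto
lemma sigma_carrier[simp]: "sigma k \<in> carrier_mat 2 2" unfolding sigma_def by auto
lemma sigma_dim[simp]: "dim_row (sigma k) = 2" "dim_col (sigma k) = 2" unfolding sigma_def pauli_def by auto
lemma rep_carrier[simp]: "a \<in> carrier_mat n n \<Longrightarrow> rep a \<in> carrier_mat (2*n) (2*n)"
  unfolding rep_def by auto
lemma rep_mult: "a \<in> carrier_mat n n \<Longrightarrow> b \<in> carrier_mat n n \<Longrightarrow> rep (a*b) = rep a * rep b"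
  unfolding rep_def by (subst tens_mult) auto
lemma rep_uminus: "rep (-a) = - rep a" unfolding rep_def by (rule tens_uminus)
lemma dm_eq: "((i::nat) div 2 = j div 2 \<and> i mod 2 = j mod 2) = (i = j)"
  by (metis div_mult_mod_eq)
lemma rep_one: "rep (1\<^sub>m n) = 1\<^sub>m (2*n)"
proof (rule eq_matI)
  fix i j assume "i < dim_row (1\<^sub>m (2*n) :: complex mat)" "j < dim_col (1\<^sub>m (2*n) :: complex mat)"
  then have "i div 2 < n" "j div 2 < n" "i mod 2 < 2" "j mod 2 < 2" by auto
  then show "rep (1\<^sub>m n) $$ (i, j) = (1\<^sub>m (2*n) :: complex mat) $$ (i, j)"
    unfolding rep_def using \<open>i < _\<close> \<open>j < _\<close> dm_eq[of i j] by (auto simp del: One_nat_def)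
qed (auto simp: rep_def)

definition F :: "complex mat \<Rightarrow> complex mat \<Rightarrow> complex mat \<Rightarrow> complex mat" where
  "F c1 c2 c3 = tens c1 (sigma 1) + tens c2 (sigma 2) + tens c3 (sigma 3)"

lemma F_carrier[simp]: "c1 \<in> carrier_mat n n \<Longrightarrow> c2 \<in> carrier_mat n n \<Longrightarrow> c3 \<in> carrier_mat n n
  \<Longrightarrow> F c1 c2 c3 \<in> carrier_mat (2*n) (2*n)"
  unfolding F_def by auto

lemma Xop_carrier[simp]: "Xop N k \<in> carrier_mat (KN_dim N) (KN_dim N)"
  unfolding Xop_def by auto

context
  fixes n :: nat and c1 c2 c3 :: "complex mat"
  assumes c: "c1 \<in> carrier_mat n n" "c2 \<in> carrier_mat n n" "c3 \<in> carrier_mat n n"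
begin

lemma F_add: "c1' \<in> carrier_mat n n \<Longrightarrow> c2' \<in> carrier_mat n n \<Longrightarrow> c3' \<in> carrier_mat n n \<Longrightarrow>
  F c1 c2 c3 + F c1' c2' c3' = F (c1+c1') (c2+c2') (c3+c3')"
  unfolding F_def using c by (intro eq_matI) (auto simp: distrib_right)

lemma F_minus: "c1' \<in> carrier_mat n n \<Longrightarrow> c2' \<in> carrier_mat n n \<Longrightarrow> c3' \<in> carrier_mat n n \<Longrightarrow>
  F c1 c2 c3 - F c1' c2' c3' = F (c1-c1') (c2-c2') (c3-c3')"
  unfolding F_def using c by (intro eq_matI) (auto simp: left_diff_distrib)

lemma rep_F: assumes a: "a \<in> carrier_mat n n" shows "rep a * F c1 c2 c3 = F (a*c1) (a*c2) (a*c3)"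
proof -
  have t: "tens c1 (sigma 1) \<in> carrier_mat (2*n) (2*n)" "tens c2 (sigma 2) \<in> carrier_mat (2*n) (2*n)"
    "tens c3 (sigma 3) \<in> carrier_mat (2*n) (2*n)" "rep a \<in> carrier_mat (2*n) (2*n)" using c a by auto
  have "rep a * F c1 c2 c3 = rep a * tens c1 (sigma 1) + rep a * tens c2 (sigma 2) + rep a * tens c3 (sigma 3)"
    unfolding F_def using t by (simp add: mult_add_distrib_mat[of _ "2*n" "2*n"] assoc_add_mat[of _ "2*n" "2*n"])
  also have "\<dots> = F (a*c1) (a*c2) (a*c3)" unfolding F_def rep_def using c a
    by (simp add: tens_mult[of _ n n _ n])
  finally show ?thesis .
qed

lemma F_rep: assumes a: "a \<in> carrier_mat n n" shows "F c1 c2 c3 * rep a = F (c1*a) (c2*a) (c3*a)"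
proof -
  have t: "tens c1 (sigma 1) \<in> carrier_mat (2*n) (2*n)" "tens c2 (sigma 2) \<in> carrier_mat (2*n) (2*n)"
    "tens c3 (sigma 3) \<in> carrier_mat (2*n) (2*n)" "rep a \<in> carrier_mat (2*n) (2*n)" using c a by auto
  have "F c1 c2 c3 * rep a = tens c1 (sigma 1) * rep a + tens c2 (sigma 2) * rep a + tens c3 (sigma 3) * rep a"
    unfolding F_def using t by (simp add: add_mult_distrib_mat[of _ "2*n" "2*n"] assoc_add_mat[of _ "2*n" "2*n"])
  also have "\<dots> = F (c1*a) (c2*a) (c3*a)" unfolding F_def rep_def using c a
    by (simp add: tens_mult[of _ n n _ n])
  finally show ?thesis .
qed

end

lemma Dirac_F: "Dirac N = F (Xop N 1) (Xop N 2) (Xop N 3)"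
  unfolding Dirac_def F_def ..

lemma dd_F: "b \<in> carrier_mat (KN_dim N) (KN_dim N) \<Longrightarrow> dd N b =
  F (Xop N 1 * b - b * Xop N 1) (Xop N 2 * b - b * Xop N 2) (Xop N 3 * b - b * Xop N 3)"
  unfolding dd_def Dirac_F
  by (simp add: rep_F[of _ "KN_dim N"] F_rep[of _ "KN_dim N"], rule F_minus[of _ "KN_dim N"], auto intro!: mult_carrier_mat[of _ _ "KN_dim N"])

abbreviation "d N \<equiv> KN_dim N"

lemma rep_dim[simp]: "dim_row (rep a) = 2 * dim_row a" "dim_col (rep a) = 2 * dim_col a"
  unfolding rep_def by auto

lemma Dirac_carrier[simp]: "Dirac N \<in> carrier_mat (2*d N) (2*d N)"
  unfolding Dirac_F by (rule F_carrier) auto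

lemma dd_carrier[simp]: assumes b: "b \<in> carrier_mat (d N) (d N)" shows "dd N b \<in> carrier_mat (2*d N) (2*d N)"
proof -
  have "Dirac N * rep b \<in> carrier_mat (2*d N) (2*d N)" "rep b * Dirac N \<in> carrier_mat (2*d N) (2*d N)"
    using b by (auto intro!: mult_carrier_mat[of _ _ "2*d N"])
  then show ?thesis unfolding dd_def by (intro minus_carrier_mat) auto
qed

lemma rep_dd_carrier[simp]: "a \<in> carrier_mat (d N) (d N) \<Longrightarrow> b \<in> carrier_mat (d N) (d N) \<Longrightarrow>
  rep a * dd N b \<in> carrier_mat (2*d N) (2*d N)"
  by (rule mult_carrier_mat[OF rep_carrier dd_carrier])

lemma Omega1_carrier: "w \<in> Omega1 N \<Longrightarrow> w \<in> carrier_mat (2*d N) (2*d N)"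
  by (induction rule: Omega1.induct) auto

lemma Omega1_add: "w \<in> Omega1 N \<Longrightarrow> v \<in> Omega1 N \<Longrightarrow> w + v \<in> Omega1 N"
proof (induction rule: Omega1.induct)
  case zero then show ?case using Omega1_carrier[of v N] by simp
next
  case (step a b w)
  have "rep a * dd N b + w + v = rep a * dd N b + (w + v)"
    using step Omega1_carrier[of v N] Omega1_carrier[of w N]
    by (intro assoc_add_mat[of _ "2*d N" "2*d N"]) auto
  then show ?case using step Omega1.step by auto
qed

lemma Omega1_dd: "b \<in> carrier_mat (d N) (d N) \<Longrightarrow> dd N b \<in> Omega1 N"
proof -
  assume b: "b \<in> carrier_mat (d N) (d N)"
  have "rep (1\<^sub>m (d N)) * dd N b + 0\<^sub>m (2*d N) (2*d N) \<in> Omega1 N"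
    using b by (intro Omega1.step Omega1.zero) auto
  then show ?thesis using b left_mult_one_mat[OF dd_carrier[OF b]] by (simp add: rep_one)
qed

lemma Omega1_lmult: "w \<in> Omega1 N \<Longrightarrow> a \<in> carrier_mat (d N) (d N) \<Longrightarrow> rep a * w \<in> Omega1 N"
proof (induction rule: Omega1.induct)
  case zero then show ?case using Omega1.zero[of N] by simp
next
  case (step a' b w)
  have r: "rep a * (rep a' * dd N b + w) = rep (a * a') * dd N b + rep a * w"
  proof -
    have c: "rep a \<in> carrier_mat (2*d N) (2*d N)" "rep a' \<in> carrier_mat (2*d N) (2*d N)"
      "dd N b \<in> carrier_mat (2*d N) (2*d N)" "w \<in> carrier_mat (2*d N) (2*d N)"
      using step Omega1_carrier[of w N] by auto
    have "rep a * (rep a' * dd N b + w) = rep a * (rep a' * dd N b) + rep a * w"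
      using c by (intro mult_add_distrib_mat[OF c(1)]) auto
    also have "rep a * (rep a' * dd N b) = rep (a * a') * dd N b"
      using c step by (simp add: rep_mult[of _ "d N"] assoc_mult_mat[OF c(1,2,3)])
    finally show ?thesis .
  qed
  show ?case unfolding r using step by (intro Omega1.step) auto
qed

lemma addl: fixes P Q R :: "complex mat"
  assumes "P \<in> carrier_mat n n" "Q \<in> carrier_mat n n" "R \<in> carrier_mat n n"
  shows "P - Q = (P - R) + (- Q - - R)"
  using assms by (intro eq_matI) auto

lemma leibniz: fixes D B C :: "complex mat" assumes D: "D \<in> carrier_mat n n" and B: "B \<in> carrier_mat n n" and C: "C \<in> carrier_mat n n"
  shows "(D * B - B * D) * C = (D * (B * C) - (B * C) * D) + (- B) * (D * C - C * D)"
proof -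
  have c: "D * B \<in> carrier_mat n n" "B * D \<in> carrier_mat n n" "D * C \<in> carrier_mat n n" "C * D \<in> carrier_mat n n"
    "B * C \<in> carrier_mat n n" "D * B * C \<in> carrier_mat n n" "B * D * C \<in> carrier_mat n n" "B * C * D \<in> carrier_mat n n"
    using D B C by auto
  have 1: "(D * B - B * D) * C = D * B * C - B * D * C" by (rule minus_mult_distrib_mat[OF c(1,2) C])
  have 2: "D * (B * C) = D * B * C" using D B C by (rule assoc_mult_mat[symmetric])
  have 3: "(- B) * (D * C - C * D) = (- B) * (D * C) - (- B) * (C * D)"
    by (rule mult_minus_distrib_mat[OF uminus_carrier_mat[OF B] c(3,4)])
  have 4: "(- B) * (D * C) = - (B * D * C)" "(- B) * (C * D) = - (B * C * D)"
    using D B C uminus_mult_left_mat[of B "D * C"] uminus_mult_left_mat[of B "C * D"] by auto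
  show ?thesis unfolding 1 2 3 4 by (rule addl[OF c(6,7,8)])
qed

lemma Omega1_dd_rmult: assumes b: "b \<in> carrier_mat (d N) (d N)" and c: "c \<in> carrier_mat (d N) (d N)"
  shows "dd N b * rep c \<in> Omega1 N"
proof -
  have "dd N b * rep c = dd N (b * c) + rep (- b) * dd N c"
    unfolding dd_def rep_uminus rep_mult[OF b c] using b c
    by (rule leibniz[OF Dirac_carrier rep_carrier rep_carrier])
  moreover have "rep (- b) * dd N c \<in> Omega1 N"
    using b c by (intro Omega1_lmult Omega1_dd) auto
  ultimately show ?thesis using b c by (simp add: Omega1_add Omega1_dd)
qed

lemma Omega1_rmult: "w \<in> Omega1 N \<Longrightarrow> c \<in> carrier_mat (d N) (d N) \<Longrightarrow> w * rep c \<in> Omega1 N"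
proof (induction rule: Omega1.induct)
  case zero then show ?case using Omega1.zero[of N] by simp
next
  case (step a b w)
  have r: "(rep a * dd N b + w) * rep c = rep a * (dd N b * rep c) + w * rep c"
  proof -
    have c: "rep a \<in> carrier_mat (2*d N) (2*d N)" "rep c \<in> carrier_mat (2*d N) (2*d N)"
      "dd N b \<in> carrier_mat (2*d N) (2*d N)" "w \<in> carrier_mat (2*d N) (2*d N)"
      "rep a * dd N b \<in> carrier_mat (2*d N) (2*d N)"
      using step Omega1_carrier[of w N] by auto
    have "(rep a * dd N b + w) * rep c = rep a * dd N b * rep c + w * rep c"
      by (rule add_mult_distrib_mat[OF c(5,4,2)])
    also have "rep a * dd N b * rep c = rep a * (dd N b * rep c)"
      by (rule assoc_mult_mat[OF c(1,3,2)])
    finally show ?thesis .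
  qed
  show ?case unfolding r using step by (intro Omega1_add Omega1_lmult Omega1_dd_rmult) auto
qed

definition E :: "nat \<Rightarrow> nat \<Rightarrow> nat \<Rightarrow> complex mat" where
  "E n r s = mat n n (\<lambda>(i,j). if i = r \<and> j = s then 1 else 0)"

lemma E_carrier[simp]: "E n r s \<in> carrier_mat n n" unfolding E_def by auto
lemma E_dim[simp]: "dim_row (E n r s) = n" "dim_col (E n r s) = n" unfolding E_def by auto

lemma E_mult: assumes c: "c \<in> carrier_mat n n" and r: "r < n" and s: "s < n"
  shows "E n r s * c = mat n n (\<lambda>(i,l). if i = r then c $$ (s,l) else 0)"
proof (rule eq_matI)
  fix i j assume ij: "i < dim_row (mat n n (\<lambda>(i,l). if i = r then c $$ (s,l) else 0))"
     "j < dim_col (mat n n (\<lambda>(i,l). if i = r then c $$ (s,l) else 0))"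
  have "(E n r s * c) $$ (i,j) = (\<Sum>m<n. (if i = r \<and> m = s then 1 else 0) * c $$ (m,j))"
    using ij c unfolding E_def by (simp add: scalar_prod_def atLeast0LessThan)
  also have "\<dots> = (if i = r then c $$ (s,j) else 0)"
    using s by (simp add: if_distrib[where f = "\<lambda>x. x * _"] sum.delta' cong: if_cong)
  finally show "(E n r s * c) $$ (i,j) = mat n n (\<lambda>(i,l). if i = r then c $$ (s,l) else 0) $$ (i,j)"
    using ij by simp
qed (use c in auto)

lemma mult_E: assumes c: "c \<in> carrier_mat n n" and r: "r < n" and s: "s < n"
  shows "c * E n r s = mat n n (\<lambda>(i,l). if l = s then c $$ (i,r) else 0)"
proof (rule eq_matI)
  fix i j assume ij: "i < dim_row (mat n n (\<lambda>(i,l). if l = s then c $$ (i,r) else 0))"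
     "j < dim_col (mat n n (\<lambda>(i,l). if l = s then c $$ (i,r) else 0))"
  have "(c * E n r s) $$ (i,j) = (\<Sum>m<n. c $$ (i,m) * (if m = r \<and> j = s then 1 else 0))"
    using ij c unfolding E_def by (simp add: scalar_prod_def atLeast0LessThan)
  also have "\<dots> = (if j = s then c $$ (i,r) else 0)"
    using r by (simp add: if_distrib[where f = "\<lambda>x. _ * x"] sum.delta' cong: if_cong)
  finally show "(c * E n r s) $$ (i,j) = mat n n (\<lambda>(i,l). if l = s then c $$ (i,r) else 0) $$ (i,j)"
    using ij by simp
qed (use c in auto)

lemma sandwich: assumes c: "c \<in> carrier_mat n n" and m: "m < n" and p: "p < n" and q: "q < n"
  shows "E n m p * c * E n q m = c $$ (p,q) \<cdot>\<^sub>m E n m m"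
proof -
  have "E n m p * c \<in> carrier_mat n n" using c by (intro mult_carrier_mat[OF E_carrier])
  then show ?thesis unfolding E_mult[OF c m p]
    by (subst mult_E) (use m q c in \<open>auto simp: E_def intro!: eq_matI\<close>)
qed

definition inM :: "nat \<Rightarrow> complex mat \<Rightarrow> complex mat \<Rightarrow> complex mat \<Rightarrow> bool" where
  "inM N c1 c2 c3 \<longleftrightarrow> c1 \<in> carrier_mat (d N) (d N) \<and> c2 \<in> carrier_mat (d N) (d N)
     \<and> c3 \<in> carrier_mat (d N) (d N) \<and> F c1 c2 c3 \<in> Omega1 N"

lemma inM_lmult: "inM N c1 c2 c3 \<Longrightarrow> a \<in> carrier_mat (d N) (d N) \<Longrightarrow> inM N (a*c1) (a*c2) (a*c3)"
  unfolding inM_def using rep_F[of c1 "d N" c2 c3 a] Omega1_lmult[of "F c1 c2 c3" N a]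
  by (auto intro!: mult_carrier_mat[of _ _ "d N"])

lemma inM_rmult: "inM N c1 c2 c3 \<Longrightarrow> a \<in> carrier_mat (d N) (d N) \<Longrightarrow> inM N (c1*a) (c2*a) (c3*a)"
  unfolding inM_def using F_rep[of c1 "d N" c2 c3 a] Omega1_rmult[of "F c1 c2 c3" N a]
  by (auto intro!: mult_carrier_mat[of _ _ "d N"])

lemma inM_add: "inM N c1 c2 c3 \<Longrightarrow> inM N c1' c2' c3' \<Longrightarrow> inM N (c1+c1') (c2+c2') (c3+c3')"
  unfolding inM_def using F_add[of c1 "d N" c2 c3 c1' c2' c3'] Omega1_add[of "F c1 c2 c3" N "F c1' c2' c3'"]
  by auto

lemma inM_dd: "b \<in> carrier_mat (d N) (d N) \<Longrightarrow>
  inM N (Xop N 1 * b - b * Xop N 1) (Xop N 2 * b - b * Xop N 2) (Xop N 3 * b - b * Xop N 3)"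
  unfolding inM_def using dd_F[of b N] Omega1_dd[of b N]
  by (auto intro!: minus_carrier_mat mult_carrier_mat[of _ _ "d N"])

lemma inM_zero: "inM N (0\<^sub>m (d N) (d N)) (0\<^sub>m (d N) (d N)) (0\<^sub>m (d N) (d N))"
proof -
  have "F (0\<^sub>m (d N) (d N)) (0\<^sub>m (d N) (d N)) (0\<^sub>m (d N) (d N)) = 0\<^sub>m (2 * d N) (2 * d N)"
    unfolding F_def tens_zero by simp
  then show ?thesis unfolding inM_def using Omega1.zero[of N] by auto
qed

definition Dg :: "nat \<Rightarrow> nat \<Rightarrow> complex mat" where
  "Dg n k = mat n n (\<lambda>(i,j). if i = j \<and> i < k then 1 else 0)"

lemma inM_sandwich_aux:
  assumes c: "inM N c1 c2 c3" and p: "p < d N" and q: "q < d N"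
  shows "k \<le> d N \<Longrightarrow> inM N (c1 $$ (p,q) \<cdot>\<^sub>m Dg (d N) k) (c2 $$ (p,q) \<cdot>\<^sub>m Dg (d N) k) (c3 $$ (p,q) \<cdot>\<^sub>m Dg (d N) k)"
proof (induction k)
  case 0
  have "x \<cdot>\<^sub>m Dg (d N) 0 = 0\<^sub>m (d N) (d N)" for x unfolding Dg_def by (intro eq_matI) auto
  then show ?case using inM_zero by simp
next
  case (Suc k)
  then have k: "k < d N" by simp
  have cc: "c1 \<in> carrier_mat (d N) (d N)" "c2 \<in> carrier_mat (d N) (d N)" "c3 \<in> carrier_mat (d N) (d N)"
    using c unfolding inM_def by auto
  have "inM N (E (d N) k p * c1 * E (d N) q k) (E (d N) k p * c2 * E (d N) q k) (E (d N) k p * c3 * E (d N) q k)"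
    using c by (intro inM_rmult inM_lmult) auto
  then have 1: "inM N (c1 $$ (p,q) \<cdot>\<^sub>m E (d N) k k) (c2 $$ (p,q) \<cdot>\<^sub>m E (d N) k k) (c3 $$ (p,q) \<cdot>\<^sub>m E (d N) k k)"
    using sandwich[OF cc(1) k p q] sandwich[OF cc(2) k p q] sandwich[OF cc(3) k p q] by simp
  have e: "x \<cdot>\<^sub>m Dg (d N) k + x \<cdot>\<^sub>m E (d N) k k = x \<cdot>\<^sub>m Dg (d N) (Suc k)" for x
    unfolding Dg_def E_def by (intro eq_matI) auto
  show ?case using inM_add[OF Suc.IH 1] Suc.prems unfolding e by simp
qed

lemma inM_sandwich:
  assumes c: "inM N c1 c2 c3" and p: "p < d N" and q: "q < d N"
  shows "inM N (c1 $$ (p,q) \<cdot>\<^sub>m 1\<^sub>m (d N)) (c2 $$ (p,q) \<cdot>\<^sub>m 1\<^sub>m (d N)) (c3 $$ (p,q) \<cdot>\<^sub>m 1\<^sub>m (d N))"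
proof -
  have "Dg (d N) (d N) = 1\<^sub>m (d N)" unfolding Dg_def by (intro eq_matI) auto
  then show ?thesis using inM_sandwich_aux[OF c p q, of "d N"] by simp
qed

abbreviation G :: "nat \<Rightarrow> complex \<Rightarrow> complex \<Rightarrow> complex \<Rightarrow> bool" where
  "G N x y z \<equiv> inM N (x \<cdot>\<^sub>m 1\<^sub>m (d N)) (y \<cdot>\<^sub>m 1\<^sub>m (d N)) (z \<cdot>\<^sub>m 1\<^sub>m (d N))"

lemma G_add: "G N x y z \<Longrightarrow> G N x' y' z' \<Longrightarrow> G N (x+x') (y+y') (z+z')"
  using inM_add[of N "x \<cdot>\<^sub>m 1\<^sub>m (d N)" "y \<cdot>\<^sub>m 1\<^sub>m (d N)" "z \<cdot>\<^sub>m 1\<^sub>m (d N)"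
     "x' \<cdot>\<^sub>m 1\<^sub>m (d N)" "y' \<cdot>\<^sub>m 1\<^sub>m (d N)" "z' \<cdot>\<^sub>m 1\<^sub>m (d N)"]
  by (simp add: add_smult_distrib_right_mat[of "1\<^sub>m (d N)" "d N" "d N", symmetric])

lemma G_smult: "G N x y z \<Longrightarrow> G N (s*x) (s*y) (s*z)"
proof -
  assume g: "G N x y z"
  have e: "(s \<cdot>\<^sub>m 1\<^sub>m (d N)) * (x \<cdot>\<^sub>m 1\<^sub>m (d N)) = (s*x) \<cdot>\<^sub>m 1\<^sub>m (d N)" for x
    by (intro eq_matI) auto
  show ?thesis using inM_lmult[OF g, of "s \<cdot>\<^sub>m 1\<^sub>m (d N)"] unfolding e by simp
qed

lemma blk_start_simps: "blk_start 0 = 0" "blk_start (Suc 0) = Suc 0" "blk_start 2 = 3"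
  unfolding blk_start_def by auto

lemma blk1: "blk (Suc 0) = Suc 0"
  unfolding blk_def
proof (rule Least_equality)
  show "Suc 0 < blk_start (Suc (Suc 0))" by (simp add: blk_start_def)
  fix y assume "Suc 0 < blk_start (Suc y)" then show "Suc 0 \<le> y"
    by (cases y) (auto simp: blk_start_def)
qed
lemma blk2: "blk 2 = Suc 0"
  unfolding blk_def
proof (rule Least_equality)
  show "2 < blk_start (Suc (Suc 0))" by (simp add: blk_start_def)
  fix y assume "2 < blk_start (Suc y)" then show "Suc 0 \<le> y"
    by (cases y) (auto simp: blk_start_def)
qed

lemma d_ge: "N \<ge> 1 \<Longrightarrow> d N \<ge> 3"
proof -
  assume "N \<ge> 1"
  then have "(Suc N) * (Suc N + 1) \<ge> 2 * 3" by (intro mult_mono) auto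
  then show ?thesis unfolding KN_dim_def blk_start_def by linarith
qed

lemma Xop_idx: "i < d N \<Longrightarrow> j < d N \<Longrightarrow> Xop N k $$ (i,j) =
  (if blk i = blk j then rho k (blk i) (i - blk_start (blk i)) (j - blk_start (blk j)) else 0)"
  unfolding Xop_def by simp

lemma sp: "spin_plus (Suc 0) 0 (Suc 0) = 1" "spin_plus (Suc 0) (Suc 0) 0 = 0" "spin_plus (Suc 0) 0 0 = 0" "spin_plus (Suc 0) (Suc 0) (Suc 0) = 0"
  unfolding spin_plus_def by auto

lemma X_vals: assumes "N \<ge> 1"
  shows "Xop N (Suc 0) $$ (2,Suc 0) = - \<i>/2" "Xop N 2 $$ (2,Suc 0) = 1/2" "Xop N 3 $$ (2,Suc 0) = 0"
   "Xop N (Suc 0) $$ (Suc 0,2) = - \<i>/2" "Xop N 2 $$ (Suc 0,2) = - 1/2" "Xop N 3 $$ (Suc 0,2) = 0"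
   "Xop N (Suc 0) $$ (Suc 0,Suc 0) = 0" "Xop N 2 $$ (Suc 0,Suc 0) = 0" "Xop N 3 $$ (Suc 0,Suc 0) = - \<i>/2"
   "Xop N (Suc 0) $$ (2,2) = 0" "Xop N 2 $$ (2,2) = 0" "Xop N 3 $$ (2,2) = \<i>/2"
  using d_ge[OF assms]
  by (simp_all add: Xop_idx blk1 blk2 blk_start_simps rho_def spin_L_def sp field_simps)

lemma comm_E: assumes X: "X \<in> carrier_mat n n" and r: "r < n" and s: "s < n" and p: "p < n" and q: "q < n"
  shows "(X * E n r s - E n r s * X) $$ (p,q) = (if q = s then X $$ (p,r) else 0) - (if p = r then X $$ (s,q) else 0)"
  using X p q by (simp add: mult_E[OF X r s] E_mult[OF X r s])

lemma G_dd: assumes b: "b \<in> carrier_mat (d N) (d N)" and p: "p < d N" and q: "q < d N"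
  shows "G N ((Xop N 1 * b - b * Xop N 1) $$ (p,q)) ((Xop N 2 * b - b * Xop N 2) $$ (p,q)) ((Xop N 3 * b - b * Xop N 3) $$ (p,q))"
  by (rule inM_sandwich[OF inM_dd[OF b] p q])

lemma G_basis: assumes N: "N \<ge> 1"
  shows "G N 1 0 0" "G N 0 1 0" "G N 0 0 1"
proof -
  have dn: "1 < d N" "2 < d N" using d_ge[OF N] by auto
  have v1: "G N (- \<i>/2) (1/2) 0"
    using G_dd[OF E_carrier[of "d N" 1 1] dn(2) dn(1)] dn
    by (simp add: comm_E X_vals[OF N])
  have v2: "G N (\<i>/2) (1/2) 0"
    using G_dd[OF E_carrier[of "d N" 1 1] dn(1) dn(2)] dn
    by (simp add: comm_E X_vals[OF N])
  have v3: "G N 0 0 (- \<i>)"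
    using G_dd[OF E_carrier[of "d N" 1 2] dn(1) dn(2)] dn
    by (simp add: comm_E X_vals[OF N])
  show "G N 1 0 0" using G_add[OF G_smult[OF v1, of \<i>] G_smult[OF v2, of "- \<i>"]] by simp
  show "G N 0 1 0" using G_add[OF v1 v2] by simp
  show "G N 0 0 1" using G_smult[OF v3, of \<i>] by simp
qed

lemma F_idx: "c1 \<in> carrier_mat n n \<Longrightarrow> c2 \<in> carrier_mat n n \<Longrightarrow> c3 \<in> carrier_mat n n \<Longrightarrow>
  i < 2*n \<Longrightarrow> j < 2*n \<Longrightarrow> F c1 c2 c3 $$ (i,j) =
   c1 $$ (i div 2, j div 2) * sigma 1 $$ (i mod 2, j mod 2) +
   c2 $$ (i div 2, j div 2) * sigma 2 $$ (i mod 2, j mod 2) +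
   c3 $$ (i div 2, j div 2) * sigma 3 $$ (i mod 2, j mod 2)"
  unfolding F_def by simp

lemma sigma_vals:
  "sigma 1 $$ (0,0) = 0" "sigma 2 $$ (0,0) = 0" "sigma 3 $$ (0,0) = \<i>"
  "sigma 1 $$ (0,1) = \<i>" "sigma 2 $$ (0,1) = 1" "sigma 3 $$ (0,1) = 0"
  "sigma 1 $$ (1,0) = \<i>" "sigma 2 $$ (1,0) = -1" "sigma 3 $$ (1,0) = 0"
  unfolding sigma_def pauli_def by auto

lemma F_zero: "F (0\<^sub>m n n) (0\<^sub>m n n) (0\<^sub>m n n) = 0\<^sub>m (2 * n) (2 * n)"
  unfolding F_def tens_zero by simp

lemma Fsplit: assumes "a1 \<in> carrier_mat (d N) (d N)" "a2 \<in> carrier_mat (d N) (d N)" "a3 \<in> carrier_mat (d N) (d N)"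
  shows "ebasis N 1 * rep a1 + ebasis N 2 * rep a2 + ebasis N 3 * rep a3 = F a1 a2 a3"
  unfolding ebasis_def rep_def F_def using assms by (simp add: tens_mult[of _ "d N" "d N" _ "d N"])

lemma ebasis_comm: assumes "a \<in> carrier_mat (d N) (d N)"
  shows "rep a * ebasis N k = ebasis N k * rep a"
  unfolding ebasis_def rep_def using assms by (simp add: tens_mult[of _ "d N" "d N" _ "d N"])

lemma inM_all: assumes N: "N \<ge> 1" and a: "a1 \<in> carrier_mat (d N) (d N)" "a2 \<in> carrier_mat (d N) (d N)" "a3 \<in> carrier_mat (d N) (d N)"
  shows "inM N a1 a2 a3"
proof -
  have e1: "a * (1 \<cdot>\<^sub>m 1\<^sub>m (d N)) = a" "a * (0 \<cdot>\<^sub>m 1\<^sub>m (d N)) = 0\<^sub>m (d N) (d N)"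
    if "a \<in> carrier_mat (d N) (d N)" for a :: "complex mat"
    using that by (simp_all add: mult_smult_distrib[OF that one_carrier_mat]) (auto intro!: eq_matI)
  have 1: "inM N a1 (0\<^sub>m (d N) (d N)) (0\<^sub>m (d N) (d N))"
    using inM_lmult[OF G_basis(1)[OF N] a(1)] e1[OF a(1)] by simp
  have 2: "inM N (0\<^sub>m (d N) (d N)) a2 (0\<^sub>m (d N) (d N))"
    using inM_lmult[OF G_basis(2)[OF N] a(2)] e1[OF a(2)] by simp
  have 3: "inM N (0\<^sub>m (d N) (d N)) (0\<^sub>m (d N) (d N)) a3"
    using inM_lmult[OF G_basis(3)[OF N] a(3)] e1[OF a(3)] by simp
  show ?thesis using inM_add[OF inM_add[OF 1 2] 3] a by simp
qed

lemma Omega1_F: "w \<in> Omega1 N \<Longrightarrow> \<exists>a1 a2 a3. a1 \<in> carrier_mat (d N) (d N) \<and> a2 \<in> carrier_mat (d N) (d N)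
   \<and> a3 \<in> carrier_mat (d N) (d N) \<and> w = F a1 a2 a3"
proof (induction rule: Omega1.induct)
  case zero
  have "0\<^sub>m (d N) (d N) \<in> carrier_mat (d N) (d N) \<and> 0\<^sub>m (2 * d N) (2 * d N) = F (0\<^sub>m (d N) (d N)) (0\<^sub>m (d N) (d N)) (0\<^sub>m (d N) (d N))"
    using F_zero[of "d N"] by simp
  then show ?case by blast
next
  case (step a b w)
  then obtain a1 a2 a3 where w: "a1 \<in> carrier_mat (d N) (d N)" "a2 \<in> carrier_mat (d N) (d N)"
   "a3 \<in> carrier_mat (d N) (d N)" "w = F a1 a2 a3" by blast
  define c where "c = (\<lambda>k. a * (Xop N k * b - b * Xop N k))"
  have cc: "c k \<in> carrier_mat (d N) (d N)" for k
    unfolding c_def by (intro mult_carrier_mat[OF step(1)] minus_carrier_mat) (use step(1,2) in \<open>auto intro!: mult_carrier_mat[of _ _ "d N"]\<close>)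
  have 1: "rep a * dd N b = F (c 1) (c 2) (c 3)"
    unfolding dd_F[OF step(2)] c_def by (rule rep_F[OF _ _ _ step(1)]) (use step(1,2) in \<open>auto intro!: minus_carrier_mat mult_carrier_mat[of _ _ "d N"]\<close>)
  have 2: "F (c 1) (c 2) (c 3) + F a1 a2 a3 = F (c 1 + a1) (c 2 + a2) (c 3 + a3)"
    by (rule F_add[OF cc cc cc w(1-3)])
  have "rep a * dd N b + w = F (c 1 + a1) (c 2 + a2) (c 3 + a3)"
    unfolding w(4) 1 2 ..
  moreover have "c 1 + a1 \<in> carrier_mat (d N) (d N)" "c 2 + a2 \<in> carrier_mat (d N) (d N)" "c 3 + a3 \<in> carrier_mat (d N) (d N)"
    using w by (auto intro: add_carrier_mat)
  ultimately show ?case by blast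
qed

lemma indep: assumes a: "a1 \<in> carrier_mat (d N) (d N)" "a2 \<in> carrier_mat (d N) (d N)" "a3 \<in> carrier_mat (d N) (d N)"
  and z: "F a1 a2 a3 = 0\<^sub>m (2 * d N) (2 * d N)"
  shows "a1 = 0\<^sub>m (d N) (d N) \<and> a2 = 0\<^sub>m (d N) (d N) \<and> a3 = 0\<^sub>m (d N) (d N)"
proof -
  have "a1 $$ (i,j) = 0 \<and> a2 $$ (i,j) = 0 \<and> a3 $$ (i,j) = 0" if ij: "i < d N" "j < d N" for i j
  proof -
    have "F a1 a2 a3 $$ (2*i, 2*j) = 0" "F a1 a2 a3 $$ (2*i, 2*j+1) = 0" "F a1 a2 a3 $$ (2*i+1, 2*j) = 0"
      using z ij by auto
    then have "\<i> * a3 $$ (i,j) = 0" "a1 $$ (i,j) * \<i> + a2 $$ (i,j) = 0" "a1 $$ (i,j) * \<i> - a2 $$ (i,j) = 0"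
      using ij by (simp_all add: F_idx[OF a] sigma_vals del: One_nat_def)
    then have "a3 $$ (i,j) = 0" "(a1 $$ (i,j) * \<i> + a2 $$ (i,j)) + (a1 $$ (i,j) * \<i> - a2 $$ (i,j)) = 0" by simp_all
    then have "a3 $$ (i,j) = 0" "a1 $$ (i,j) * (2 * \<i>) = 0" by (simp_all add: ring_distribs)
    then have "a3 $$ (i,j) = 0" "a1 $$ (i,j) = 0" by simp_all
    with \<open>a1 $$ (i,j) * \<i> + a2 $$ (i,j) = 0\<close> show ?thesis by simp
  qed
  then show ?thesis using a by (auto intro!: eq_matI)
qed

theorem proposition8p1:
  fixes N :: nat
  assumes "N \<ge> 1"
  shows "(\<forall>k\<in>{1,2,3}. ebasis N k \<in> Omega1 N \<and>
            (\<forall>a\<in>carrier_mat (KN_dim N) (KN_dim N). rep a * ebasis N k = ebasis N k * rep a))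
       \<and> Omega1 N = {ebasis N 1 * rep a1 + ebasis N 2 * rep a2 + ebasis N 3 * rep a3 | a1 a2 a3.
                      a1 \<in> carrier_mat (KN_dim N) (KN_dim N) \<and> a2 \<in> carrier_mat (KN_dim N) (KN_dim N)
                      \<and> a3 \<in> carrier_mat (KN_dim N) (KN_dim N)}
       \<and> (\<forall>a1\<in>carrier_mat (KN_dim N) (KN_dim N). \<forall>a2\<in>carrier_mat (KN_dim N) (KN_dim N).
          \<forall>a3\<in>carrier_mat (KN_dim N) (KN_dim N).
            ebasis N 1 * rep a1 + ebasis N 2 * rep a2 + ebasis N 3 * rep a3 = 0\<^sub>m (2 * KN_dim N) (2 * KN_dim N)
            \<longrightarrow> a1 = 0\<^sub>m (KN_dim N) (KN_dim N) \<and> a2 = 0\<^sub>m (KN_dim N) (KN_dim N) \<and> a3 = 0\<^sub>m (KN_dim N) (KN_dim N))"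
proof (intro conjI ballI)
  fix k :: nat assume k: "k \<in> {1,2,3}"
  have e: "ebasis N 1 = F (1\<^sub>m (d N)) (0\<^sub>m (d N) (d N)) (0\<^sub>m (d N) (d N))"
    "ebasis N 2 = F (0\<^sub>m (d N) (d N)) (1\<^sub>m (d N)) (0\<^sub>m (d N) (d N))"
    "ebasis N 3 = F (0\<^sub>m (d N) (d N)) (0\<^sub>m (d N) (d N)) (1\<^sub>m (d N))"
    by (intro eq_matI; simp add: ebasis_def F_def)+
  have i: "inM N (1\<^sub>m (d N)) (0\<^sub>m (d N) (d N)) (0\<^sub>m (d N) (d N))"
    "inM N (0\<^sub>m (d N) (d N)) (1\<^sub>m (d N)) (0\<^sub>m (d N) (d N))"
    "inM N (0\<^sub>m (d N) (d N)) (0\<^sub>m (d N) (d N)) (1\<^sub>m (d N))"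
    by (rule inM_all[OF assms]; simp)+
  from k e i show "ebasis N k \<in> Omega1 N" unfolding inM_def by auto
next
  fix k :: nat and a :: "complex mat" assume "a \<in> carrier_mat (KN_dim N) (KN_dim N)"
  then show "rep a * ebasis N k = ebasis N k * rep a" by (rule ebasis_comm)
next
  show "Omega1 N = {ebasis N 1 * rep a1 + ebasis N 2 * rep a2 + ebasis N 3 * rep a3 | a1 a2 a3.
                      a1 \<in> carrier_mat (KN_dim N) (KN_dim N) \<and> a2 \<in> carrier_mat (KN_dim N) (KN_dim N)
                      \<and> a3 \<in> carrier_mat (KN_dim N) (KN_dim N)}"
  proof (rule equalityI; rule subsetI)
    fix w assume "w \<in> Omega1 N"
    then obtain a1 a2 a3 where a: "a1 \<in> carrier_mat (d N) (d N)" "a2 \<in> carrier_mat (d N) (d N)"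
      "a3 \<in> carrier_mat (d N) (d N)" and w: "w = F a1 a2 a3" using Omega1_F by blast
    have "w = ebasis N 1 * rep a1 + ebasis N 2 * rep a2 + ebasis N 3 * rep a3" unfolding w Fsplit[OF a] ..
    then show "w \<in> {ebasis N 1 * rep a1 + ebasis N 2 * rep a2 + ebasis N 3 * rep a3 | a1 a2 a3.
                      a1 \<in> carrier_mat (KN_dim N) (KN_dim N) \<and> a2 \<in> carrier_mat (KN_dim N) (KN_dim N)
                      \<and> a3 \<in> carrier_mat (KN_dim N) (KN_dim N)}"
      unfolding mem_Collect_eq by (intro exI[of _ a1] exI[of _ a2] exI[of _ a3] conjI a)
  next
    fix w assume "w \<in> {ebasis N 1 * rep a1 + ebasis N 2 * rep a2 + ebasis N 3 * rep a3 | a1 a2 a3.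
                      a1 \<in> carrier_mat (KN_dim N) (KN_dim N) \<and> a2 \<in> carrier_mat (KN_dim N) (KN_dim N)
                      \<and> a3 \<in> carrier_mat (KN_dim N) (KN_dim N)}"
    then obtain a1 a2 a3 where a: "a1 \<in> carrier_mat (d N) (d N)" "a2 \<in> carrier_mat (d N) (d N)"
      "a3 \<in> carrier_mat (d N) (d N)" and w: "w = ebasis N 1 * rep a1 + ebasis N 2 * rep a2 + ebasis N 3 * rep a3"
      unfolding mem_Collect_eq by blast
    show "w \<in> Omega1 N" using inM_all[OF assms a] unfolding w Fsplit[OF a] inM_def by (elim conjE)
  qed
next
  fix a1 a2 a3 :: "complex mat" assume a: "a1 \<in> carrier_mat (KN_dim N) (KN_dim N)" "a2 \<in> carrier_mat (KN_dim N) (KN_dim N)"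
    "a3 \<in> carrier_mat (KN_dim N) (KN_dim N)"
  show "ebasis N 1 * rep a1 + ebasis N 2 * rep a2 + ebasis N 3 * rep a3 = 0\<^sub>m (2 * KN_dim N) (2 * KN_dim N)
            \<longrightarrow> a1 = 0\<^sub>m (KN_dim N) (KN_dim N) \<and> a2 = 0\<^sub>m (KN_dim N) (KN_dim N) \<and> a3 = 0\<^sub>m (KN_dim N) (KN_dim N)"
    unfolding Fsplit[OF a] using indep[OF a] by blast
qed

end
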